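(* Let $G$ be a simple graph with at least one edge, with Laplacian eigenvalues $\mu_1\ge\mu_2\ge\cdots\ge\mu_n$, and (having fixed orientations of the edges and triangles of $G$) let $\eta_1\ge\eta_2\ge\cdots\ge\eta_t$ be the eigenvalues of the adjacency matrix $A(G_{\vartriangle})$ of the triangular signed graph $G_{\vartriangle}$. Then the non-zero eigenvalues of $\mathcal{H}(G)$ (with multiplicities) are exactly all $\mu_i$ with $\mu_i\ne 0$ together with all $3+\eta_j$ with $\eta_j\ne -3$. In particular, the largest eigenvalue of $\mathcal{H}(G)$ is $\max\{\mu_1,3+\eta_1\}$ (the term $3+\eta_1$ being absent when $G$ has no triangles).
   Context: $L(G)=D(G)-A(G)$ is the Laplacian matrix. For an oriented edge $e$ write $e^-$ for its tail and $e^+$ for its head. For distinct edges $e,e'$: $e\leftrightarrow e'$ means $e^+=e'^-$ or $e'^+=e^-$; $e\overset{\pm}{\sim}e'$ means $e^+=e'^+$ or $e^-=e'^-$; $e\vartriangle e'$ means $e,e'$ are two edges of a common triangle. $\triangle(e)$ is the number of triangles containing $e$. The Helmholtzian matrix $\mathcal{H}(G)=(h_{ee'})$ is indexed by edges, with $h_{ee}=\triangle(e)+2$, and for $e\ne e'$: $h_{ee'}=-1$ if $e\leftrightarrow e'$ and not $e\vartriangle e'$; $h_{ee'}=1$ if $e\overset{\pm}{\sim}e'$ and not $e\vartriangle e'$; $h_{ee'}=0$ otherwise. Each triangle $\vartriangle$ is given a cyclic orientation; for an edge $e$ of $\vartriangle$ write $e\in\vartriangle^+$ if the orientation of $e$ agrees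 with that of $\vartriangle$ and $e\in\vartriangle^-$ otherwise. The triangular signed graph $G_{\vartriangle}$ has the $t$ triangles of $G$ as vertices; two distinct triangles $\vartriangle_1,\vartriangle_2$ sharing an edge $e$ are joined by a positive edge if $e\in\vartriangle_1^+\cap\vartriangle_2^+$ or $e\in\vartriangle_1^-\cap\vartriangle_2^-$, and by a negative edge otherwise; triangles sharing no edge are non-adjacent. $A(G_{\vartriangle})$ has entry $\pm1$ for positive/negative edges and $0$ elsewhere. *)

theory Defs
  imports Main "Jordan_Normal_Form.Char_Poly"
begin

text \<open>A simple graph on vertex set {0..<n} with a fixed orientation of its edges is
given by a list es of oriented edges (tail, head). Edges of G are indexed by
positions in es.\<close>

definition simple_oriented_graph :: "nat \<Rightarrow> (nat \<times> nat) list \<Rightarrow> bool" where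
  "simple_oriented_graph n es \<longleftrightarrow> distinct es \<and>
     (\<forall>(u,v) \<in> set es. u < n \<and> v < n \<and> u \<noteq> v \<and> (v,u) \<notin> set es)"

definition adj :: "(nat \<times> nat) list \<Rightarrow> nat \<Rightarrow> nat \<Rightarrow> bool" where
  "adj es u v \<longleftrightarrow> (u,v) \<in> set es \<or> (v,u) \<in> set es"

definition laplacian :: "nat \<Rightarrow> (nat \<times> nat) list \<Rightarrow> real mat" where
  "laplacian n es = mat n n (\<lambda>(i,j).
     if i = j then real (card {v. v < n \<and> adj es i v})
     else if adj es i j then -1 else 0)"

definition is_triangle :: "(nat \<times> nat) list \<Rightarrow> nat set \<Rightarrow> bool" where
  "is_triangle es T \<longleftrightarrow> card T = 3 \<and> (\<forall>u\<in>T. \<forall>v\<in>T. u \<noteq> v \<longrightarrow> adj es u v)"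

definition edge_in :: "nat \<times> nat \<Rightarrow> nat set \<Rightarrow> bool" where
  "edge_in e T \<longleftrightarrow> fst e \<in> T \<and> snd e \<in> T"

definition num_tri :: "(nat \<times> nat) list \<Rightarrow> nat \<times> nat \<Rightarrow> nat" where
  "num_tri es e = card {T. is_triangle es T \<and> edge_in e T}"

definition common_tri :: "(nat \<times> nat) list \<Rightarrow> nat \<times> nat \<Rightarrow> nat \<times> nat \<Rightarrow> bool" where
  "common_tri es e e' \<longleftrightarrow> (\<exists>T. is_triangle es T \<and> edge_in e T \<and> edge_in e' T)"

definition head_tail :: "nat \<times> nat \<Rightarrow> nat \<times> nat \<Rightarrow> bool" where
  "head_tail e e' \<longleftrightarrow> snd e = fst e' \<or> snd e' = fst e"

definition same_end :: "nat \<times> nat \<Rightarrow> nat \<times> nat \<Rightarrow> bool" where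
  "same_end e e' \<longleftrightarrow> snd e = snd e' \<or> fst e = fst e'"

definition helmholtzian :: "(nat \<times> nat) list \<Rightarrow> real mat" where
  "helmholtzian es = mat (length es) (length es) (\<lambda>(i,j).
     let e = es ! i; e' = es ! j in
     if i = j then real (num_tri es e) + 2
     else if head_tail e e' \<and> \<not> common_tri es e e' then -1
     else if same_end e e' \<and> \<not> common_tri es e e' then 1
     else 0)"

text \<open>An oriented triangle (a,b,c) carries the cyclic orientation a \<rightarrow> b \<rightarrow> c \<rightarrow> a.\<close>
definition tri_set :: "nat \<times> nat \<times> nat \<Rightarrow> nat set" where
  "tri_set t = (case t of (a,b,c) \<Rightarrow> {a,b,c})"

definition tri_pos :: "nat \<times> nat \<times> nat \<Rightarrow> nat \<times> nat \<Rightarrow> bool" where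
  "tri_pos t e = (case t of (a,b,c) \<Rightarrow> e \<in> {(a,b),(b,c),(c,a)})"

definition tri_neg :: "nat \<times> nat \<times> nat \<Rightarrow> nat \<times> nat \<Rightarrow> bool" where
  "tri_neg t e = (case t of (a,b,c) \<Rightarrow> e \<in> {(b,a),(c,b),(a,c)})"

definition oriented_triangles :: "(nat \<times> nat) list \<Rightarrow> (nat \<times> nat \<times> nat) list \<Rightarrow> bool" where
  "oriented_triangles es ts \<longleftrightarrow> distinct (map tri_set ts) \<and>
     set (map tri_set ts) = {T. is_triangle es T}"

definition tri_signed_adj :: "(nat \<times> nat) list \<Rightarrow> (nat \<times> nat \<times> nat) list \<Rightarrow> real mat" where
  "tri_signed_adj es ts = mat (length ts) (length ts) (\<lambda>(i,j).
     if i = j then 0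
     else if \<exists>e \<in> set es. edge_in e (tri_set (ts ! i)) \<and> edge_in e (tri_set (ts ! j)) then
       (if \<exists>e \<in> set es. edge_in e (tri_set (ts ! i)) \<and> edge_in e (tri_set (ts ! j)) \<and>
             ((tri_pos (ts ! i) e \<and> tri_pos (ts ! j) e) \<or> (tri_neg (ts ! i) e \<and> tri_neg (ts ! j) e))
        then 1 else -1)
     else 0)"

definition max_eig :: "real mat \<Rightarrow> real" where
  "max_eig A = Max {x. eigenvalue A x}"

end

theory Submission
  imports Defs "Jordan_Normal_Form.Schur_Decomposition"
begin

hide_const (open) Coset.order



lemma sylvester_det:
  fixes K :: "real mat" and x :: real
  assumes K: "K \<in> carrier_mat m p"
  shows "x^p * det (x \<cdot>\<^sub>m 1\<^sub>m m - K * transpose_mat K) = x^m * det (x \<cdot>\<^sub>m 1\<^sub>m p - transpose_mat K * K)"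
proof -
  have KT: "transpose_mat K \<in> carrier_mat p m" using K by simp
  define M where "M = four_block_mat (x \<cdot>\<^sub>m 1\<^sub>m m) K (transpose_mat K) (1\<^sub>m p)"
  define N1 where "N1 = four_block_mat (1\<^sub>m m) (0\<^sub>m m p) (- transpose_mat K) (1\<^sub>m p)"
  define N2 where "N2 = four_block_mat (1\<^sub>m m) (0\<^sub>m m p) (- transpose_mat K) (x \<cdot>\<^sub>m 1\<^sub>m p)"
  have Mc: "M \<in> carrier_mat (m+p) (m+p)" unfolding M_def using K KT by simp
  have N1c: "N1 \<in> carrier_mat (m+p) (m+p)" unfolding N1_def using K KT by simp
  have N2c: "N2 \<in> carrier_mat (m+p) (m+p)" unfolding N2_def using K KT by simp
  have "M * N1 = four_block_mat (x \<cdot>\<^sub>m 1\<^sub>m m - K * transpose_mat K) K (0\<^sub>m p m) (1\<^sub>m p)"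
    unfolding M_def N1_def
    apply (subst mult_four_block_mat)
    using K KT apply (auto)
    done
  note MN1 = this
  have "N2 * M = four_block_mat (x \<cdot>\<^sub>m 1\<^sub>m m) K (0\<^sub>m p m) (x \<cdot>\<^sub>m 1\<^sub>m p - transpose_mat K * K)"
    unfolding M_def N2_def
    apply (subst mult_four_block_mat)
    using K KT apply (auto)
    done
  note N2M = this
  have dN1: "det N1 = 1" unfolding N1_def
    by (subst det_four_block_mat_upper_right_zero[of _ m _ p], insert KT, auto)
  have dN2: "det N2 = x^p" unfolding N2_def
    by (subst det_four_block_mat_upper_right_zero[of _ m _ p], insert KT, auto)
  have dMN1: "det (M * N1) = det (x \<cdot>\<^sub>m 1\<^sub>m m - K * transpose_mat K)" unfolding MN1
    by (subst det_four_block_mat_lower_left_zero[of _ m _ p], insert K KT, auto)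
  have dN2M: "det (N2 * M) = x^m * det (x \<cdot>\<^sub>m 1\<^sub>m p - transpose_mat K * K)" unfolding N2M
    by (subst det_four_block_mat_lower_left_zero[of _ m _ p], insert K KT, auto)
  have "det M = det (x \<cdot>\<^sub>m 1\<^sub>m m - K * transpose_mat K)"
    using dMN1 det_mult[OF Mc N1c] dN1 by simp
  then show ?thesis using dN2M det_mult[OF N2c Mc] dN2 by simp
qed



lemma dvd_pcompose_my: "(a::'a::comm_ring_1 poly) dvd b \<Longrightarrow> pcompose a r dvd pcompose b r"
  by (metis dvdE dvdI pcompose_mult)

lemma pcompose_power_my: "pcompose ((a::'a::comm_ring_1 poly)^k) r = (pcompose a r)^k"
  by (induct k) (auto simp: pcompose_mult)

lemma lin_comp: "pcompose [:-(a::'a::comm_ring_1), 1:] [:b, 1:] = [:b - a, 1:]"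
  by (simp add: pcompose_pCons)

lemma pcompose_lin_inv: "pcompose (pcompose (p::'a::comm_ring_1 poly) [:-c,1:]) [:c,1:] = p"
proof -
  have "pcompose [:-c,1:] [:c,1:] = [:0,1:]" by (simp add: pcompose_pCons)
  then show ?thesis by (metis pcompose_assoc pcompose_idR)
qed

lemma order_pcompose_shift:
  fixes p :: "'a::idom poly"
  shows "order x (pcompose p [:-c,1:]) = order (x - c) p"
proof (cases "p = 0")
  case True then show ?thesis by (simp add: Polynomial.order_def)
next
  case False
  let ?k = "order (x - c) p"
  have d1: "[:-(x-c),1:]^?k dvd p" by (rule order_1)
  have "pcompose ([:-(x-c),1:]^?k) [:-c,1:] dvd pcompose p [:-c,1:]"
    by (rule dvd_pcompose_my[OF d1])
  moreover have "pcompose ([:-(x-c),1:]^?k) [:-c,1:] = [:-x,1:]^?k"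
    unfolding pcompose_power_my by (simp add: lin_comp)
  ultimately have A: "[:-x,1:]^?k dvd pcompose p [:-c,1:]" by simp
  have B: "\<not> [:-x,1:]^Suc ?k dvd pcompose p [:-c,1:]"
  proof
    assume "[:-x,1:]^Suc ?k dvd pcompose p [:-c,1:]"
    from dvd_pcompose_my[OF this, of "[:c,1:]"]
    have "pcompose ([:-x,1:]^Suc ?k) [:c,1:] dvd p" by (simp add: pcompose_lin_inv)
    moreover have "pcompose ([:-x,1:]^Suc ?k) [:c,1:] = [:-(x-c),1:]^Suc ?k"
      unfolding pcompose_power_my by (simp add: lin_comp)
    ultimately have "[:-(x-c),1:]^Suc ?k dvd p" by simp
    with order_2[OF False] show False by blast
  qed
  show ?thesis using order_unique_lemma[OF A B] by simp
qed



lemma poly_char_poly_det: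
  fixes A :: "real mat"
  assumes A: "A \<in> carrier_mat n n"
  shows "poly (char_poly A) x = det (x \<cdot>\<^sub>m 1\<^sub>m n - A)"
proof -
  have "- char_matrix A x = x \<cdot>\<^sub>m 1\<^sub>m n - A"
    unfolding char_matrix_def by (rule eq_matI, insert A, auto)
  then show ?thesis using char_poly_matrix[OF A] by simp
qed

lemma char_poly_sylvester:
  fixes K :: "real mat"
  assumes K: "K \<in> carrier_mat m p"
  shows "[:0,1:]^p * char_poly (K * transpose_mat K) = [:0,1:]^m * char_poly (transpose_mat K * K)"
proof -
  have c1: "K * transpose_mat K \<in> carrier_mat m m" using K by simp
  have c2: "transpose_mat K * K \<in> carrier_mat p p" using K by simp
  show ?thesis
    by (rule poly_ext, simp add: poly_char_poly_det[OF c1] poly_char_poly_det[OF c2] sylvester_det[OF K])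
qed

lemma char_poly_block_diag:
  fixes A D :: "real mat"
  assumes A: "A \<in> carrier_mat n n" and D: "D \<in> carrier_mat k k"
  shows "char_poly (four_block_mat A (0\<^sub>m n k) (0\<^sub>m k n) D) = char_poly A * char_poly D"
proof (rule poly_ext)
  fix x
  have c: "four_block_mat A (0\<^sub>m n k) (0\<^sub>m k n) D \<in> carrier_mat (n+k) (n+k)" using A D by simp
  have "x \<cdot>\<^sub>m 1\<^sub>m (n+k) - four_block_mat A (0\<^sub>m n k) (0\<^sub>m k n) D
     = four_block_mat (x \<cdot>\<^sub>m 1\<^sub>m n - A) (0\<^sub>m n k) (0\<^sub>m k n) (x \<cdot>\<^sub>m 1\<^sub>m k - D)"
    by (rule eq_matI, insert A D, auto)
  moreover have "det (four_block_mat (x \<cdot>\<^sub>m 1\<^sub>m n - A) (0\<^sub>m n k) (0\<^sub>m k n) (x \<cdot>\<^sub>m 1\<^sub>m k - D))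
     = det (x \<cdot>\<^sub>m 1\<^sub>m n - A) * det (x \<cdot>\<^sub>m 1\<^sub>m k - D)"
    by (rule det_four_block_mat_lower_left_zero, insert A D, auto)
  ultimately show "poly (char_poly (four_block_mat A (0\<^sub>m n k) (0\<^sub>m k n) D)) x = poly (char_poly A * char_poly D) x"
    by (simp add: poly_char_poly_det[OF c] poly_char_poly_det[OF A] poly_char_poly_det[OF D])
qed

lemma char_poly_shift:
  fixes A :: "real mat"
  assumes A: "A \<in> carrier_mat n n"
  shows "char_poly (c \<cdot>\<^sub>m 1\<^sub>m n + A) = pcompose (char_poly A) [:-c,1:]"
proof (rule poly_ext)
  fix x
  have c: "c \<cdot>\<^sub>m 1\<^sub>m n + A \<in> carrier_mat n n" using A by simp
  have "x \<cdot>\<^sub>m 1\<^sub>m n - (c \<cdot>\<^sub>m 1\<^sub>m n + A) = (x - c) \<cdot>\<^sub>m 1\<^sub>m n - A"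
    by (rule eq_matI, insert A, auto simp: algebra_simps)
  then show "poly (char_poly (c \<cdot>\<^sub>m 1\<^sub>m n + A)) x = poly (pcompose (char_poly A) [:-c,1:]) x"
    by (simp add: poly_char_poly_det[OF c] poly_char_poly_det[OF A] poly_pcompose)
qed



definition tr :: "'a::comm_ring_1 mat \<Rightarrow> 'a" where
  "tr A = (\<Sum>i<dim_row A. A $$ (i,i))"

lemma tr_mult_comm:
  fixes A B :: "'a::comm_ring_1 mat"
  assumes A: "A \<in> carrier_mat n k" and B: "B \<in> carrier_mat k n"
  shows "tr (A * B) = tr (B * A)"
proof -
  have "tr (A * B) = (\<Sum>i<n. \<Sum>j<k. A $$ (i,j) * B $$ (j,i))"
    unfolding tr_def using A B by (auto simp: scalar_prod_def atLeast0LessThan intro!: sum.cong)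
  also have "\<dots> = (\<Sum>j<k. \<Sum>i<n. B $$ (j,i) * A $$ (i,j))"
    by (subst sum.swap) (simp add: mult.commute)
  also have "\<dots> = tr (B * A)"
    unfolding tr_def using A B by (auto simp: scalar_prod_def atLeast0LessThan intro!: sum.cong)
  finally show ?thesis .
qed

lemma tr_similar:
  fixes A B :: "'a::comm_ring_1 mat"
  assumes "similar_mat_wit A B P Q" and A: "A \<in> carrier_mat n n"
  shows "tr A = tr B"
proof -
  from assms have c: "B \<in> carrier_mat n n" "P \<in> carrier_mat n n" "Q \<in> carrier_mat n n"
    and QP: "Q * P = 1\<^sub>m n" and eq: "A = P * B * Q"
    unfolding similar_mat_wit_def Let_def by auto
  have "tr A = tr ((P * B) * Q)" using eq by simp
  also have "\<dots> = tr (Q * (P * B))" by (rule tr_mult_comm, insert c, auto)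
  also have "Q * (P * B) = (Q * P) * B" using c by (simp add: assoc_mult_mat)
  also have "\<dots> = B" using QP c by simp
  finally show ?thesis .
qed

lemma sym_real_root:
  fixes M :: "real mat"
  assumes M: "M \<in> carrier_mat n n"
    and sym: "\<And>i j. i < n \<Longrightarrow> j < n \<Longrightarrow> M $$ (i,j) = M $$ (j,i)"
    and root: "poly (char_poly (map_mat complex_of_real M)) a = 0"
  shows "Im a = 0"
proof -
  let ?M = "map_mat complex_of_real M"
  have Mc: "?M \<in> carrier_mat n n" using M by simp
  from root eigenvalue_root_char_poly[OF Mc] have "eigenvalue ?M a" by simp
  then obtain v where v: "v \<in> carrier_vec n" "v \<noteq> 0\<^sub>v n" "?M *\<^sub>v v = a \<cdot>\<^sub>v v"
    unfolding eigenvalue_def eigenvector_def using M by auto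
  define s where "s = (\<Sum>i<n. cnj (v$i) * (?M *\<^sub>v v) $ i)"
  define N where "N = (\<Sum>i<n. cnj (v$i) * v$i)"
  have s1: "s = a * N" unfolding s_def N_def v(3) using v(1)
    by (auto simp: sum_distrib_left algebra_simps intro!: sum.cong)
  have s2: "s = (\<Sum>i<n. \<Sum>j<n. cnj (v$i) * complex_of_real (M $$ (i,j)) * v$j)"
    unfolding s_def using v(1) M
    by (auto simp: scalar_prod_def sum_distrib_left atLeast0LessThan algebra_simps intro!: sum.cong)
  have "cnj s = (\<Sum>i<n. \<Sum>j<n. v$i * complex_of_real (M $$ (i,j)) * cnj (v$j))"
    unfolding s2 by simp
  also have "\<dots> = (\<Sum>j<n. \<Sum>i<n. v$i * complex_of_real (M $$ (i,j)) * cnj (v$j))"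
    by (rule sum.swap)
  also have "\<dots> = s" unfolding s2
    by (auto simp: sym algebra_simps intro!: sum.cong)
  finally have cs: "cnj s = s" .
  have Nr: "N = complex_of_real (\<Sum>i<n. (cmod (v$i))^2)"
    unfolding N_def by (simp add: complex_norm_square mult.commute del: of_real_power)
  obtain i where i: "i < n" "v $ i \<noteq> 0" using v(1,2) by (metis eq_vecI index_zero_vec(1) index_zero_vec(2) carrier_vecD)
  have "(\<Sum>i<n. (cmod (v$i))^2) > 0"
  proof -
    have "(\<Sum>i<n. (cmod (v$i))^2) \<ge> (cmod (v$i))^2"
      by (rule member_le_sum, insert i, auto)
    moreover have "(cmod (v$i))^2 > 0" using i by simp
    ultimately show ?thesis by linarith
  qed
  then have N0: "N \<noteq> 0" and cN: "cnj N = N" unfolding Nr by (simp_all del: of_real_power of_real_sum)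
  have "cnj a * N = a * N" using cs s1 cN by (metis complex_cnj_mult)
  then have "cnj a = a" using N0 by simp
  then show ?thesis by (metis Reals_cnj_iff complex_is_Real_iff)
qed

lemma real_root_eig:
  fixes M :: "real mat"
  assumes M: "M \<in> carrier_mat n n"
    and sym: "\<And>i j. i < n \<Longrightarrow> j < n \<Longrightarrow> M $$ (i,j) = M $$ (j,i)"
    and root: "poly (char_poly (map_mat complex_of_real M)) a = 0"
  shows "eigenvalue M (Re a)"
proof -
  have "Im a = 0" by (rule sym_real_root[OF M sym root])
  then have a: "complex_of_real (Re a) = a" by (simp add: complex_eq_iff)
  have h2: "poly (map_poly complex_of_real (char_poly M)) a = 0"
    using root unfolding of_real_hom.char_poly_hom[OF M] .
  have h3: "poly (map_poly complex_of_real (char_poly M)) (complex_of_real (Re a)) = 0"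
    using h2 a by simp
  have "complex_of_real (poly (char_poly M) (Re a)) = 0"
    using h3 of_real_hom.poly_map_poly[of "char_poly M" "Re a"] by simp
  then have "poly (char_poly M) (Re a) = 0" by simp
  then show ?thesis using eigenvalue_root_char_poly[OF M] by simp
qed

lemma sym_eig_exists:
  fixes M :: "real mat"
  assumes M: "M \<in> carrier_mat n n" and n: "n > 0"
    and sym: "\<And>i j. i < n \<Longrightarrow> j < n \<Longrightarrow> M $$ (i,j) = M $$ (j,i)"
  shows "\<exists>r. eigenvalue M r"
proof -
  let ?M = "map_mat complex_of_real M"
  have Mc: "?M \<in> carrier_mat n n" using M by simp
  from char_poly_factorized[OF Mc] obtain as where
    cp: "char_poly ?M = (\<Prod>a\<leftarrow>as. [:- a, 1:])" and l: "length as = n" by auto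
  from l n obtain a where a: "a \<in> set as" by (cases as) auto
  have "poly (char_poly ?M) a = 0" unfolding cp using a
    by (induct as) (auto simp: poly_prod_list)
  from real_root_eig[OF M sym this] show ?thesis by blast
qed

lemma sym_pos_eig:
  fixes M :: "real mat"
  assumes M: "M \<in> carrier_mat n n"
    and sym: "\<And>i j. i < n \<Longrightarrow> j < n \<Longrightarrow> M $$ (i,j) = M $$ (j,i)"
    and trpos: "tr M > 0"
  shows "\<exists>r>0. eigenvalue M r"
proof -
  let ?M = "map_mat complex_of_real M"
  have Mc: "?M \<in> carrier_mat n n" using M by simp
  from char_poly_factorized[OF Mc] obtain as where
    cp: "char_poly ?M = (\<Prod>a\<leftarrow>as. [:- a, 1:])" and l: "length as = n" by auto
  obtain B P Q where sd: "schur_decomposition ?M as = (B,P,Q)" using prod_cases3 by metis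
  from schur_decomposition[OF Mc cp sd] have sim: "similar_mat_wit ?M B P Q" and dB: "diag_mat B = as"
    by auto
  from similar_mat_witD2[OF Mc sim] have Bc: "B \<in> carrier_mat n n" by blast
  have "tr ?M = tr B" by (rule tr_similar[OF sim Mc])
  also have "tr B = sum_list as"
  proof -
    have dr: "dim_row B = n" using Bc by blast
    have "\<And>f::nat\<Rightarrow>complex. sum_list (map f [0..<n]) = (\<Sum>i<n. f i)"
      by (simp add: sum_list_distinct_conv_sum_set atLeast0LessThan)
    then show ?thesis unfolding dB[symmetric] diag_mat_def tr_def dr by simp
  qed
  finally have 1: "tr ?M = sum_list as" .
  have "tr ?M = complex_of_real (tr M)" unfolding tr_def using M by auto
  with 1 have "sum_list as = complex_of_real (tr M)" by simp
  then have "Re (sum_list as) > 0" using trpos by simp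
  moreover have "Re (sum_list as) = (\<Sum>a\<leftarrow>as. Re a)" by (induct as) auto
  ultimately have "(\<Sum>a\<leftarrow>as. Re a) > 0" by simp
  then have "\<exists>a\<in>set as. Re a > 0"
  proof (rule contrapos_pp)
    assume "\<not> (\<exists>a\<in>set as. Re a > 0)"
    then have "\<forall>a\<in>set as. Re a \<le> 0" by auto
    then have "sum_list (map Re as) \<le> 0" by (induct as) (auto simp: add_nonpos_nonpos)
    then show "\<not> (\<Sum>a\<leftarrow>as. Re a) > 0" by simp
  qed
  then obtain a where a: "a \<in> set as" "Re a > 0" by blast
  have "poly (char_poly ?M) a = 0" unfolding cp using a(1)
    by (induct as) (auto simp: poly_prod_list)
  from real_root_eig[OF M sym this] a(2) show ?thesis by blast
qed



definition sg :: "nat \<Rightarrow> nat \<times> nat \<Rightarrow> real" where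
  "sg v e = (if v = fst e then -1 else if v = snd e then 1 else 0)"

definition st :: "nat \<times> nat \<times> nat \<Rightarrow> nat \<times> nat \<Rightarrow> real" where
  "st \<tau> e = (if tri_pos \<tau> e then 1 else if tri_neg \<tau> e then -1 else 0)"

definition vpart :: "nat \<times> nat \<Rightarrow> nat \<times> nat \<Rightarrow> real" where
  "vpart e e' = (if head_tail e e' then -1 else if same_end e e' then 1 else 0)"

lemma st_prod_tri:
  assumes "a\<noteq>b" "b\<noteq>c" "a\<noteq>c" "x \<in> {a,b,c}" "y \<in> {a,b,c}" "x'\<in>{a,b,c}" "y'\<in>{a,b,c}"
    "x\<noteq>y" "x'\<noteq>y'" "(x,y) \<noteq> (x',y')" "(x',y') \<noteq> (y,x)"
  shows "st (a,b,c) (x,y) * st (a,b,c) (x',y') = - vpart (x,y) (x',y')"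
proof -
  from assms(4-7) have "(x=a \<or> x=b \<or> x=c) \<and> (y=a \<or> y=b \<or> y=c) \<and> (x'=a \<or> x'=b \<or> x'=c) \<and> (y'=a \<or> y'=b \<or> y'=c)"
    by auto
  then show ?thesis
    by (elim conjE disjE) (use assms(1-3,8-11) in \<open>simp_all add: st_def tri_pos_def tri_neg_def vpart_def head_tail_def same_end_def\<close>)
qed

lemma vpart_sg:
  assumes "x\<noteq>y" "x'\<noteq>y'" "(x,y) \<noteq> (x',y')" "(x',y') \<noteq> (y,x)"
  shows "- sg x (x',y') + sg y (x',y') = vpart (x,y) (x',y')"
  using assms by (auto simp: sg_def vpart_def head_tail_def same_end_def)

lemma sum_supp:
  assumes "finite A" "\<And>x. x \<in> A \<Longrightarrow> g x \<noteq> 0 \<Longrightarrow> x \<in> S"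
  shows "sum g A = sum g (A \<inter> S)"
  by (rule sum.mono_neutral_right, insert assms, auto)

lemma sum_sym:
  fixes g :: "'a \<times> 'a \<Rightarrow> real"
  assumes "finite E" "E \<inter> prod.swap ` E = {}" "\<And>p. p \<in> E \<Longrightarrow> g (prod.swap p) = g p"
  shows "2 * sum g E = sum g (E \<union> prod.swap ` E)"
proof -
  have "inj_on prod.swap E" by (auto simp: inj_on_def)
  then have 1: "sum g (prod.swap ` E) = sum (g \<circ> prod.swap) E" by (rule sum.reindex)
  have 2: "sum (g \<circ> prod.swap) E = sum g E" using assms(3) by (auto intro: sum.cong)
  have 3: "sum g (E \<union> prod.swap ` E) = sum g E + sum g (prod.swap ` E)"
    by (rule sum.union_disjoint, use assms(1,2) in auto)
  show ?thesis unfolding 3 1 2 by simp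
qed

lemma sum_nth_set:
  assumes "distinct xs"
  shows "(\<Sum>k<length xs. g (xs ! k)) = sum g (set xs)"
proof -
  have "sum g (set xs) = sum_list (map g xs)" using assms by (simp add: sum_list_distinct_conv_sum_set)
  also have "\<dots> = (\<Sum>k<length xs. g (xs ! k))"
    by (simp add: sum_list_sum_nth atLeast0LessThan)
  finally show ?thesis by simp
qed

lemma vsum:
  assumes "fst e < n" "snd e < n" "fst e \<noteq> snd e"
  shows "(\<Sum>v<n. sg v e * sg v e') = - sg (fst e) e' + sg (snd e) e'"
proof -
  have "(\<Sum>v<n. sg v e * sg v e') = (\<Sum>v\<in>{..<n} \<inter> {fst e, snd e}. sg v e * sg v e')"
    by (rule sum_supp, auto simp: sg_def split: if_splits)
  also have "{..<n} \<inter> {fst e, snd e} = {fst e, snd e}" using assms by auto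
  finally show ?thesis using assms by (simp add: sg_def)
qed



definition S6 :: "nat \<Rightarrow> nat \<Rightarrow> nat \<Rightarrow> (nat \<times> nat) set" where
  "S6 a b c = {(a,b),(b,a),(b,c),(c,b),(c,a),(a,c)}"

lemma tri_pos_iff: "tri_pos (a,b,c) (x,y) \<longleftrightarrow> (x=a\<and>y=b \<or> x=b\<and>y=c \<or> x=c\<and>y=a)"
  by (auto simp: tri_pos_def)
lemma tri_neg_iff: "tri_neg (a,b,c) (x,y) \<longleftrightarrow> (x=b\<and>y=a \<or> x=c\<and>y=b \<or> x=a\<and>y=c)"
  by (auto simp: tri_neg_def)
lemma S6_iff: "(x,y) \<in> S6 a b c \<longleftrightarrow> tri_pos (a,b,c) (x,y) \<or> tri_neg (a,b,c) (x,y)"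
  unfolding tri_pos_iff tri_neg_iff S6_def by auto

lemma st_supp: "st (a,b,c) p \<noteq> 0 \<Longrightarrow> p \<in> S6 a b c"
  by (cases p) (simp add: S6_iff st_def split: if_splits)

lemma pos_neg_excl: "a \<noteq> b \<Longrightarrow> b \<noteq> c \<Longrightarrow> a \<noteq> c \<Longrightarrow> \<not> (tri_pos (a,b,c) (x,y) \<and> tri_neg (a,b,c) (x,y))"
  unfolding tri_pos_iff tri_neg_iff by auto

lemma st_swap: assumes "a \<noteq> b" "b \<noteq> c" "a \<noteq> c" shows "st (a,b,c) (prod.swap p) = - st (a,b,c) p"
proof (cases p)
  case (Pair x y)
  have 1: "tri_pos (a,b,c) (y,x) = tri_neg (a,b,c) (x,y)" "tri_neg (a,b,c) (y,x) = tri_pos (a,b,c) (x,y)"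
    unfolding tri_pos_iff tri_neg_iff by auto
  show ?thesis using pos_neg_excl[OF assms, of x y] unfolding Pair st_def by (auto simp: 1)
qed

lemma sg_swap: "fst p \<noteq> snd p \<Longrightarrow> sg j (prod.swap p) = - sg j p"
  by (cases p) (auto simp: sg_def)

lemma st_sq: "a \<noteq> b \<Longrightarrow> b \<noteq> c \<Longrightarrow> a \<noteq> c \<Longrightarrow> fst e \<noteq> snd e \<Longrightarrow>
  st (a,b,c) e * st (a,b,c) e = (if edge_in e (tri_set (a,b,c)) then 1 else 0)"
  by (cases e) (simp add: st_def tri_pos_iff tri_neg_iff edge_in_def tri_set_def, blast)

lemma st_in: "a \<noteq> b \<Longrightarrow> b \<noteq> c \<Longrightarrow> a \<noteq> c \<Longrightarrow> fst e \<noteq> snd e \<Longrightarrow> edge_in e (tri_set (a,b,c)) \<Longrightarrow>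
  st (a,b,c) e = (if tri_pos (a,b,c) e then 1 else -1) \<and> (tri_neg (a,b,c) e \<longleftrightarrow> \<not> tri_pos (a,b,c) e)"
  by (cases e) (simp add: st_def tri_pos_iff tri_neg_iff edge_in_def tri_set_def, blast)

lemma S6_edge_in: "p \<in> S6 a b c \<Longrightarrow> edge_in p (tri_set (a,b,c))"
  by (cases p) (auto simp: S6_def edge_in_def tri_set_def)
lemma tri_card: "is_triangle es T \<Longrightarrow> card T = 3" by (simp add: is_triangle_def)

lemma tri_inter:
  assumes T: "is_triangle es T" and T': "is_triangle es T'" and ne: "T \<noteq> T'"
    and xyz: "x \<in> T \<inter> T'" "y \<in> T \<inter> T'" "z \<in> T \<inter> T'" "x \<noteq> y" "y \<noteq> z" "x \<noteq> z"
  shows False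
proof -
  have c3: "card {x,y,z} = 3" using xyz by auto
  have fT: "finite T" using tri_card[OF T] by (metis card.infinite zero_neq_numeral)
  have fT': "finite T'" using tri_card[OF T'] by (metis card.infinite zero_neq_numeral)
  have "{x,y,z} = T" by (rule card_subset_eq[OF fT], insert xyz c3 tri_card[OF T], auto)
  moreover have "{x,y,z} = T'" by (rule card_subset_eq[OF fT'], insert xyz c3 tri_card[OF T'], auto)
  ultimately show False using ne by simp
qed

lemma pair_in_inter:
  assumes T: "is_triangle es T" and T': "is_triangle es T'" and ne: "T \<noteq> T'"
    and uw: "u \<in> T \<inter> T'" "w \<in> T \<inter> T'" "u \<noteq> w"
    and xy: "x \<in> T \<inter> T'" "y \<in> T \<inter> T'" "x \<noteq> y"
  shows "(x,y) = (u,w) \<or> (x,y) = (w,u)"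
proof -
  have "x \<in> {u,w}" using tri_inter[OF T T' ne uw(1,2) xy(1)] uw(3) by blast
  moreover have "y \<in> {u,w}" using tri_inter[OF T T' ne uw(1,2) xy(2)] uw(3) by blast
  ultimately show ?thesis using xy(3) by auto
qed

definition Km :: "nat \<Rightarrow> (nat \<times> nat) list \<Rightarrow> (nat \<times> nat \<times> nat) list \<Rightarrow> real mat" where
  "Km n es ts = mat (length es) (n + length ts) (\<lambda>(k,j). if j < n then sg j (es!k) else st (ts!(j-n)) (es!k))"

lemma Km_carrier: "Km n es ts \<in> carrier_mat (length es) (n + length ts)"
  by (simp add: Km_def)

lemma KKT_entry:
  assumes "k < length es" "k' < length es"
  shows "(Km n es ts * transpose_mat (Km n es ts)) $$ (k,k') =
    (\<Sum>v<n. sg v (es!k) * sg v (es!k')) + (\<Sum>i<length ts. st (ts!i) (es!k) * st (ts!i) (es!k'))"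
proof -
  let ?f = "\<lambda>j. Km n es ts $$ (k,j) * Km n es ts $$ (k',j)"
  have "(Km n es ts * transpose_mat (Km n es ts)) $$ (k,k') = sum ?f {0..<n + length ts}"
    using assms by (simp add: Km_def scalar_prod_def)
  also have "\<dots> = sum ?f {0..<n} + sum ?f {n..<n + length ts}"
    by (rule sum.atLeastLessThan_concat[symmetric], auto)
  also have "sum ?f {0..<n} = (\<Sum>v<n. sg v (es!k) * sg v (es!k'))"
    using assms by (auto simp: Km_def atLeast0LessThan intro!: sum.cong)
  also have "sum ?f {n..<n + length ts} = sum (\<lambda>i. ?f (i + n)) {0..<length ts}"
    using sum.shift_bounds_nat_ivl[of ?f 0 n "length ts"] by (simp add: add.commute)
  also have "\<dots> = (\<Sum>i<length ts. st (ts!i) (es!k) * st (ts!i) (es!k'))"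
    using assms by (auto simp: Km_def atLeast0LessThan intro!: sum.cong)
  finally show ?thesis .
qed

lemma KTK_entry:
  assumes "j < n + length ts" "j' < n + length ts"
  shows "(transpose_mat (Km n es ts) * Km n es ts) $$ (j,j') =
    (\<Sum>k<length es. Km n es ts $$ (k,j) * Km n es ts $$ (k,j'))"
  using assms by (simp add: Km_def scalar_prod_def atLeast0LessThan)


locale gctx =
  fixes n :: nat and es :: "(nat \<times> nat) list" and ts :: "(nat \<times> nat \<times> nat) list"
  assumes sog: "simple_oriented_graph n es" and ot: "oriented_triangles es ts"
begin

lemma dist: "distinct es" using sog unfolding simple_oriented_graph_def by simp

lemma Ep: assumes "e \<in> set es" shows "fst e < n \<and> snd e < n \<and> fst e \<noteq> snd e \<and> prod.swap e \<notin> set es"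
proof -
  obtain x y where e: "e = (x,y)" by (cases e)
  have "x < n \<and> y < n \<and> x \<noteq> y \<and> (y,x) \<notin> set es"
    using sog assms e unfolding simple_oriented_graph_def by blast
  then show ?thesis using e by simp
qed

lemma swap_mem: "(u,v) \<in> prod.swap ` A \<longleftrightarrow> (v,u) \<in> A" by force

definition D where "D = set es \<union> prod.swap ` set es"

lemma D_fin: "finite D" by (simp add: D_def)

lemma D_disj: "set es \<inter> prod.swap ` set es = {}"
  using Ep by (auto simp: image_iff)

lemma D_adj: "(u,v) \<in> D \<longleftrightarrow> adj es u v"
  by (auto simp: D_def adj_def swap_mem)

lemma D_prop: "p \<in> D \<Longrightarrow> fst p < n \<and> snd p < n \<and> fst p \<noteq> snd p"
  using Ep[of p] Ep[of "prod.swap p"] by (cases p) (auto simp: D_def swap_mem)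

lemma adj_lt: "adj es u v \<Longrightarrow> u < n \<and> v < n \<and> u \<noteq> v"
  using D_prop[of "(u,v)"] D_adj by simp

lemma sumE_sym:
  fixes g :: "nat \<times> nat \<Rightarrow> real"
  assumes "\<And>p. p \<in> set es \<Longrightarrow> g (prod.swap p) = g p"
  shows "2 * (\<Sum>k<length es. g (es!k)) = sum g D"
  unfolding sum_nth_set[OF dist] D_def by (rule sum_sym) (use D_disj assms in auto)

lemma tri_is: "i < length ts \<Longrightarrow> is_triangle es (tri_set (ts!i))"
  using ot unfolding oriented_triangles_def by (metis mem_Collect_eq nth_map nth_mem length_map)

lemma tri_inj: "i < length ts \<Longrightarrow> j < length ts \<Longrightarrow> tri_set (ts!i) = tri_set (ts!j) \<Longrightarrow> i = j"
  using ot unfolding oriented_triangles_def by (metis length_map nth_eq_iff_index_eq nth_map)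

lemma tri_surj: "is_triangle es T \<Longrightarrow> \<exists>i<length ts. tri_set (ts!i) = T"
  using ot unfolding oriented_triangles_def by (metis in_set_conv_nth length_map mem_Collect_eq nth_map)

lemma tri_mem:
  assumes "i < length ts" "ts!i = (a,b,c)"
  shows "a \<noteq> b \<and> b \<noteq> c \<and> a \<noteq> c \<and> adj es a b \<and> adj es b c \<and> adj es a c"
proof -
  have T: "is_triangle es {a,b,c}" using tri_is[OF assms(1)] assms(2) by (simp add: tri_set_def)
  then have "card {a,b,c} = 3" by (simp add: is_triangle_def)
  then have d: "a \<noteq> b \<and> b \<noteq> c \<and> a \<noteq> c" by (auto simp: card_insert_if split: if_splits)
  with T show ?thesis unfolding is_triangle_def by auto
qed

lemma S6_D: "i < length ts \<Longrightarrow> ts!i = (a,b,c) \<Longrightarrow> S6 a b c \<subseteq> D"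
  using tri_mem[of i a b c] by (auto simp: S6_def D_adj adj_def)

lemma sum_S6:
  assumes "a \<noteq> b" "b \<noteq> c" "a \<noteq> c"
  shows "sum g (S6 a b c) = g (a,b) + g (b,a) + g (b,c) + g (c,b) + g (c,a) + g (a,c)"
  using assms by (simp add: S6_def add.assoc)


lemma sum_ind_card: "finite A \<Longrightarrow> (\<Sum>p\<in>A. if P p then 1 else 0) = real (card {p\<in>A. P p})"
  by (simp add: sum.inter_filter[symmetric])

lemma adj_sym: "adj es u v = adj es v u" by (auto simp: adj_def)

lemma lap_entry:
  assumes j: "j < n" and j': "j' < n"
  shows "(\<Sum>k<length es. sg j (es!k) * sg j' (es!k)) = laplacian n es $$ (j,j')"
proof -
  define g where "g p = sg j p * sg j' p" for p
  have "2 * (\<Sum>k<length es. g (es!k)) = sum g D"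
    by (rule sumE_sym, insert Ep, auto simp: g_def sg_swap)
  then have 2: "2 * (\<Sum>k<length es. sg j (es!k) * sg j' (es!k)) = sum g D" by (simp add: g_def)
  show ?thesis
  proof (cases "j = j'")
    case True
    have "sum g D = (\<Sum>p\<in>D. (if fst p = j then 1 else 0) + (if snd p = j then 1 else 0))"
      by (rule sum.cong, simp, frule D_prop, use True in \<open>auto simp: g_def sg_def\<close>)
    also have "\<dots> = real (card {p\<in>D. fst p = j}) + real (card {p\<in>D. snd p = j})"
      by (simp add: sum.distrib sum_ind_card D_fin)
    also have "{p\<in>D. fst p = j} = Pair j ` {v. v < n \<and> adj es j v}"
      using D_adj adj_lt by auto
    also have "{p\<in>D. snd p = j} = (\<lambda>v. (v,j)) ` {v. v < n \<and> adj es j v}"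
      using D_adj adj_lt adj_sym by auto
    also have "card (Pair j ` {v. v < n \<and> adj es j v}) = card {v. v < n \<and> adj es j v}"
      by (rule card_image, auto intro: inj_onI)
    also have "card ((\<lambda>v. (v,j)) ` {v. v < n \<and> adj es j v}) = card {v. v < n \<and> adj es j v}"
      by (rule card_image, auto intro: inj_onI)
    finally have "sum g D = 2 * real (card {v. v < n \<and> adj es j v})" by simp
    with 2 show ?thesis using True j by (simp add: laplacian_def)
  next
    case False
    have "sum g D = sum g (D \<inter> {(j,j'),(j',j)})"
      by (rule sum_supp[OF D_fin], use False in \<open>auto simp: g_def sg_def split: if_splits\<close>)
    also have "\<dots> = (if adj es j j' then -2 else 0)"
    proof (cases "adj es j j'")
      case True
      then have "D \<inter> {(j,j'),(j',j)} = {(j,j'),(j',j)}" using D_adj adj_sym by auto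
      then show ?thesis using True False by (simp add: g_def sg_def)
    next
      case F: False
      then have "D \<inter> {(j,j'),(j',j)} = {}" using D_adj adj_sym by auto
      then show ?thesis using F by simp
    qed
    finally show ?thesis using 2 False j j' by (simp add: laplacian_def split: if_splits)
  qed
qed


lemma g_sym_st:
  assumes "i < length ts"
  shows "p \<in> set es \<Longrightarrow> st (ts!i) (prod.swap p) = - st (ts!i) p"
proof -
  obtain a b c where t: "ts!i = (a,b,c)" using prod_cases3 by metis
  show ?thesis unfolding t using tri_mem[OF assms t] st_swap by auto
qed

lemma b12_zero:
  assumes i: "i < length ts"
  shows "(\<Sum>k<length es. sg j (es!k) * st (ts!i) (es!k)) = 0"
proof -
  obtain a b c where t: "ts!i = (a,b,c)" using prod_cases3 by metis
  have d: "a \<noteq> b" "b \<noteq> c" "a \<noteq> c" using tri_mem[OF i t] by auto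
  define g where "g p = sg j p * st (a,b,c) p" for p
  have "2 * (\<Sum>k<length es. g (es!k)) = sum g D"
    by (rule sumE_sym, insert Ep, auto simp: g_def sg_swap st_swap[OF d])
  also have "sum g D = sum g (D \<inter> S6 a b c)"
    by (rule sum_supp[OF D_fin], auto simp: g_def dest: st_supp)
  also have "D \<inter> S6 a b c = S6 a b c" using S6_D[OF i t] by auto
  also have "sum g (S6 a b c) = 0"
    unfolding sum_S6[OF d] g_def using d by (simp add: sg_def st_def tri_pos_iff tri_neg_iff)
  finally show ?thesis unfolding g_def t by simp
qed

lemma A_diag:
  assumes i: "i < length ts"
  shows "(\<Sum>k<length es. st (ts!i) (es!k) * st (ts!i) (es!k)) = 3"
proof -
  obtain a b c where t: "ts!i = (a,b,c)" using prod_cases3 by metis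
  have d: "a \<noteq> b" "b \<noteq> c" "a \<noteq> c" using tri_mem[OF i t] by auto
  define g where "g p = st (a,b,c) p * st (a,b,c) p" for p
  have "2 * (\<Sum>k<length es. g (es!k)) = sum g D"
    by (rule sumE_sym, auto simp: g_def st_swap[OF d])
  also have "sum g D = sum g (D \<inter> S6 a b c)"
    by (rule sum_supp[OF D_fin], auto simp: g_def dest: st_supp)
  also have "D \<inter> S6 a b c = S6 a b c" using S6_D[OF i t] by auto
  also have "sum g (S6 a b c) = 6"
    unfolding sum_S6[OF d] g_def using d by (simp add: st_def tri_pos_iff tri_neg_iff)
  finally show ?thesis unfolding g_def t by simp
qed

lemma edge_in_swap: "edge_in (prod.swap p) T = edge_in p T"
  by (auto simp: edge_in_def)

lemma A_off:
  assumes i: "i < length ts" and i': "i' < length ts" and ne: "i \<noteq> i'"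
  shows "(\<Sum>k<length es. st (ts!i) (es!k) * st (ts!i') (es!k)) = tri_signed_adj es ts $$ (i,i')"
proof -
  obtain a b c where t: "ts!i = (a,b,c)" using prod_cases3 by metis
  have d: "a \<noteq> b" "b \<noteq> c" "a \<noteq> c" using tri_mem[OF i t] by auto
  obtain a' b' c' where t': "ts!i' = (a',b',c')" using prod_cases3 by metis
  have d': "a' \<noteq> b'" "b' \<noteq> c'" "a' \<noteq> c'" using tri_mem[OF i' t'] by auto
  define T where "T = tri_set (ts!i)"
  define T' where "T' = tri_set (ts!i')"
  have TT: "is_triangle es T" "is_triangle es T'" using tri_is i i' by (auto simp: T_def T'_def)
  have TT': "T \<noteq> T'" using tri_inj[OF i i'] ne by (auto simp: T_def T'_def)
  define g where "g p = st (a,b,c) p * st (a',b',c') p" for p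
  have gsym: "g (prod.swap p) = g p" for p by (simp add: g_def st_swap[OF d] st_swap[OF d'])
  have gsupp: "edge_in p T \<and> edge_in p T'" if "g p \<noteq> 0" for p
  proof -
    have "st (a,b,c) p \<noteq> 0" "st (a',b',c') p \<noteq> 0" using that by (auto simp: g_def)
    then show ?thesis unfolding T_def T'_def t t' by (auto dest!: st_supp intro: S6_edge_in)
  qed
  have 2: "2 * (\<Sum>k<length es. g (es!k)) = sum g D"
    by (rule sumE_sym, simp add: gsym)
  have entry: "tri_signed_adj es ts $$ (i,i') =
     (if \<exists>e\<in>set es. edge_in e T \<and> edge_in e T' then
       (if \<exists>e\<in>set es. edge_in e T \<and> edge_in e T' \<and>
             ((tri_pos (ts ! i) e \<and> tri_pos (ts ! i') e) \<or> (tri_neg (ts ! i) e \<and> tri_neg (ts ! i') e))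
        then 1 else -1) else 0)"
    using i i' ne by (simp add: tri_signed_adj_def T_def T'_def)
  show ?thesis
  proof (cases "\<exists>e\<in>set es. edge_in e T \<and> edge_in e T'")
    case True
    then obtain e where e: "e \<in> set es" "edge_in e T" "edge_in e T'" by blast
    obtain u w where uw: "e = (u,w)" by (cases e)
    have uwp: "u \<noteq> w" "(w,u) \<notin> set es" using Ep[OF e(1)] uw by auto
    have uwT: "u \<in> T \<inter> T'" "w \<in> T \<inter> T'" using e uw by (auto simp: edge_in_def)
    have only: "p = (u,w) \<or> p = (w,u)" if "edge_in p T" "edge_in p T'" "fst p \<noteq> snd p" for p
      using pair_in_inter[OF TT TT' uwT uwp(1), of "fst p" "snd p"] that
      by (cases p) (auto simp: edge_in_def)
    have "sum g D = sum g (D \<inter> {(u,w),(w,u)})"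
      by (rule sum_supp[OF D_fin], use gsupp only D_prop in blast)
    also have "D \<inter> {(u,w),(w,u)} = {(u,w),(w,u)}" using e(1) uw D_adj adj_def by auto
    also have "sum g {(u,w),(w,u)} = 2 * g (u,w)" using uwp gsym[of "(u,w)"] by simp
    finally have sE: "(\<Sum>k<length es. g (es!k)) = g e" using 2 uw by simp
    have ine: "edge_in e (tri_set (a,b,c))" "edge_in e (tri_set (a',b',c'))"
      using e t t' by (auto simp: T_def T'_def)
    have fe: "fst e \<noteq> snd e" using uw uwp by simp
    note s1 = st_in[OF d fe ine(1)] and s2 = st_in[OF d' fe ine(2)]
    have iff: "(\<exists>e'\<in>set es. edge_in e' T \<and> edge_in e' T' \<and>
             ((tri_pos (ts ! i) e' \<and> tri_pos (ts ! i') e') \<or> (tri_neg (ts ! i) e' \<and> tri_neg (ts ! i') e')))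
         \<longleftrightarrow> ((tri_pos (a,b,c) e \<and> tri_pos (a',b',c') e) \<or> (tri_neg (a,b,c) e \<and> tri_neg (a',b',c') e))"
    proof
      assume "\<exists>e'\<in>set es. edge_in e' T \<and> edge_in e' T' \<and>
             ((tri_pos (ts ! i) e' \<and> tri_pos (ts ! i') e') \<or> (tri_neg (ts ! i) e' \<and> tri_neg (ts ! i') e'))"
      then obtain e' where e': "e' \<in> set es" "edge_in e' T" "edge_in e' T'"
        "(tri_pos (ts ! i) e' \<and> tri_pos (ts ! i') e') \<or> (tri_neg (ts ! i) e' \<and> tri_neg (ts ! i') e')" by blast
      have "e' = (u,w) \<or> e' = (w,u)" using only[OF e'(2,3)] Ep[OF e'(1)] by blast
      then have "e' = e" using e'(1) uwp uw by auto
      then show "(tri_pos (a,b,c) e \<and> tri_pos (a',b',c') e) \<or> (tri_neg (a,b,c) e \<and> tri_neg (a',b',c') e)"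
        using e'(4) t t' by simp
    next
      assume "(tri_pos (a,b,c) e \<and> tri_pos (a',b',c') e) \<or> (tri_neg (a,b,c) e \<and> tri_neg (a',b',c') e)"
      then show "\<exists>e'\<in>set es. edge_in e' T \<and> edge_in e' T' \<and>
             ((tri_pos (ts ! i) e' \<and> tri_pos (ts ! i') e') \<or> (tri_neg (ts ! i) e' \<and> tri_neg (ts ! i') e'))"
        unfolding t t' using e by blast
    qed
    have "g e = (if (tri_pos (a,b,c) e \<and> tri_pos (a',b',c') e) \<or> (tri_neg (a,b,c) e \<and> tri_neg (a',b',c') e) then 1 else -1)"
      unfolding g_def using s1 s2 by auto
    then show ?thesis unfolding entry iff using True sE g_def t t' by simp
  next
    case False
    have "sum g D = 0"
    proof (rule sum.neutral, rule ballI, rule ccontr)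
      fix p assume p: "p \<in> D" "g p \<noteq> 0"
      from gsupp[OF p(2)] have "edge_in p T" "edge_in p T'" by auto
      moreover from p(1) have "p \<in> set es \<or> prod.swap p \<in> set es"
        unfolding D_def by (cases p) (auto simp: swap_mem)
      ultimately show False using False edge_in_swap by metis
    qed
    then show ?thesis unfolding entry using False 2 g_def t t' by simp
  qed
qed


lemma vsum_diag: "e \<in> set es \<Longrightarrow> (\<Sum>v<n. sg v e * sg v e) = 2"
  using vsum[of e n e] Ep[of e] by (simp add: sg_def)

lemma vsum_off: "e \<in> set es \<Longrightarrow> e' \<in> set es \<Longrightarrow> e \<noteq> e' \<Longrightarrow> (\<Sum>v<n. sg v e * sg v e') = vpart e e'"
  using vsum[of e n e'] Ep[of e] Ep[of e'] vpart_sg[of "fst e" "snd e" "fst e'" "snd e'"]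
  by (cases e, cases e') auto

lemma st_nz_edge: "i < length ts \<Longrightarrow> st (ts!i) e \<noteq> 0 \<Longrightarrow> edge_in e (tri_set (ts!i))"
  by (metis prod_cases3 st_supp S6_edge_in)

lemma tsum_diag:
  assumes e: "e \<in> set es"
  shows "(\<Sum>i<length ts. st (ts!i) e * st (ts!i) e) = real (num_tri es e)"
proof -
  have "(\<Sum>i<length ts. st (ts!i) e * st (ts!i) e) = (\<Sum>i<length ts. if edge_in e (tri_set (ts!i)) then 1 else 0)"
  proof (rule sum.cong[OF refl])
    fix i assume "i \<in> {..<length ts}"
    then have i: "i < length ts" by simp
    obtain a b c where t: "ts!i = (a,b,c)" using prod_cases3 by metis
    have d: "a \<noteq> b" "b \<noteq> c" "a \<noteq> c" using tri_mem[OF i t] by auto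
    show "st (ts!i) e * st (ts!i) e = (if edge_in e (tri_set (ts!i)) then 1 else 0)"
      unfolding t by (rule st_sq[OF d], use Ep[OF e] in simp)
  qed
  also have "\<dots> = real (card {i\<in>{..<length ts}. edge_in e (tri_set (ts!i))})"
    by (rule sum_ind_card, simp)
  also have "card {i\<in>{..<length ts}. edge_in e (tri_set (ts!i))} =
      card ((\<lambda>i. tri_set (ts!i)) ` {i\<in>{..<length ts}. edge_in e (tri_set (ts!i))})"
    by (rule card_image[symmetric], rule inj_onI, use tri_inj in auto)
  also have "(\<lambda>i. tri_set (ts!i)) ` {i\<in>{..<length ts}. edge_in e (tri_set (ts!i))} = {T. is_triangle es T \<and> edge_in e T}"
    using tri_is tri_surj by auto
  finally show ?thesis by (simp add: num_tri_def)
qed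

lemma tsum_off:
  assumes e: "e \<in> set es" and e': "e' \<in> set es" and ne: "e \<noteq> e'"
  shows "(\<Sum>i<length ts. st (ts!i) e * st (ts!i) e') = (if common_tri es e e' then - vpart e e' else 0)"
proof (cases "common_tri es e e'")
  case True
  then obtain T where T: "is_triangle es T" "edge_in e T" "edge_in e' T" by (auto simp: common_tri_def)
  obtain i0 where i0: "i0 < length ts" "tri_set (ts!i0) = T" using tri_surj[OF T(1)] by blast
  have Ee: "fst e \<noteq> snd e" "prod.swap e \<notin> set es" "fst e' \<noteq> snd e'" using Ep[OF e] Ep[OF e'] by auto
  have only: "i = i0" if i: "i < length ts" "st (ts!i) e * st (ts!i) e' \<noteq> 0" for i
  proof (rule ccontr)
    assume "i \<noteq> i0"
    then have TiT: "tri_set (ts!i) \<noteq> T" using tri_inj[OF i(1) i0(1)] i0(2) by auto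
    have Ti: "edge_in e (tri_set (ts!i))" "edge_in e' (tri_set (ts!i))" using st_nz_edge[OF i(1)] i(2) by auto
    define z where "z = (if fst e' \<notin> {fst e, snd e} then fst e' else snd e')"
    have z: "z \<notin> {fst e, snd e}"
    proof
      assume zin: "z \<in> {fst e, snd e}"
      then have "fst e' \<in> {fst e, snd e}" "snd e' \<in> {fst e, snd e}" unfolding z_def by (auto split: if_splits)
      then have "e' = e \<or> e' = prod.swap e" using Ee by (cases e, cases e') auto
      then show False using ne Ee e' by auto
    qed
    have "z \<in> tri_set (ts!i) \<inter> T" using Ti T unfolding z_def by (auto simp: edge_in_def)
    moreover have "fst e \<in> tri_set (ts!i) \<inter> T" "snd e \<in> tri_set (ts!i) \<inter> T" using Ti T by (auto simp: edge_in_def)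
    ultimately show False using tri_inter[OF tri_is[OF i(1)] T(1) TiT] z Ee by blast
  qed
  have "(\<Sum>i<length ts. st (ts!i) e * st (ts!i) e') = (\<Sum>i\<in>{..<length ts} \<inter> {i0}. st (ts!i) e * st (ts!i) e')"
    by (rule sum_supp, auto dest: only)
  also have "{..<length ts} \<inter> {i0} = {i0}" using i0 by auto
  also have "(\<Sum>i\<in>{i0}. st (ts!i) e * st (ts!i) e') = - vpart e e'"
  proof -
    obtain a b c where t: "ts!i0 = (a,b,c)" using prod_cases3 by metis
    have d: "a \<noteq> b" "b \<noteq> c" "a \<noteq> c" using tri_mem[OF i0(1) t] by auto
    obtain x y where xy: "e = (x,y)" by (cases e)
    obtain x' y' where xy': "e' = (x',y')" by (cases e')
    have "x \<in> {a,b,c}" "y \<in> {a,b,c}" "x' \<in> {a,b,c}" "y' \<in> {a,b,c}"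
      using T(2,3) i0(2) t xy xy' by (auto simp: edge_in_def tri_set_def)
    moreover have "x \<noteq> y" "x' \<noteq> y'" "(x,y) \<noteq> (x',y')" using Ee ne xy xy' by auto
    moreover have "(x',y') \<noteq> (y,x)" using e' Ee xy xy' by auto
    ultimately have "st (a,b,c) (x,y) * st (a,b,c) (x',y') = - vpart (x,y) (x',y')"
      by (rule st_prod_tri[OF d])
    then show ?thesis using t xy xy' by simp
  qed
  finally show ?thesis using True by simp
next
  case False
  have "(\<Sum>i<length ts. st (ts!i) e * st (ts!i) e') = 0"
  proof (rule sum.neutral, rule ballI, rule ccontr)
    fix i assume i: "i \<in> {..<length ts}" "st (ts!i) e * st (ts!i) e' \<noteq> 0"
    then have "edge_in e (tri_set (ts!i))" "edge_in e' (tri_set (ts!i))" using st_nz_edge by auto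
    then show False using False tri_is i(1) by (auto simp: common_tri_def)
  qed
  then show ?thesis using False by simp
qed


lemma H_eq: "helmholtzian es = Km n es ts * transpose_mat (Km n es ts)"
proof (rule eq_matI)
  show "dim_row (helmholtzian es) = dim_row (Km n es ts * transpose_mat (Km n es ts))"
    by (simp add: helmholtzian_def Km_def)
  show "dim_col (helmholtzian es) = dim_col (Km n es ts * transpose_mat (Km n es ts))"
    by (simp add: helmholtzian_def Km_def)
  fix k k' assume "k < dim_row (Km n es ts * transpose_mat (Km n es ts))"
    "k' < dim_col (Km n es ts * transpose_mat (Km n es ts))"
  then have k: "k < length es" "k' < length es" by (auto simp: Km_def)
  have e: "es!k \<in> set es" "es!k' \<in> set es" using k by auto
  show "helmholtzian es $$ (k,k') = (Km n es ts * transpose_mat (Km n es ts)) $$ (k,k')"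
  proof (cases "k = k'")
    case True
    then show ?thesis using k e unfolding KKT_entry[OF k]
      by (simp add: helmholtzian_def vsum_diag tsum_diag)
  next
    case False
    then have ne: "es!k \<noteq> es!k'" using k dist by (simp add: nth_eq_iff_index_eq)
    show ?thesis using k e False unfolding KKT_entry[OF k]
      by (simp add: helmholtzian_def vsum_off[OF e ne] tsum_off[OF e ne] vpart_def Let_def)
  qed
qed

lemma Km_index: "k < length es \<Longrightarrow> j < n + length ts \<Longrightarrow>
   Km n es ts $$ (k,j) = (if j < n then sg j (es!k) else st (ts!(j-n)) (es!k))"
  by (simp add: Km_def)

lemma KTK_eq: "transpose_mat (Km n es ts) * Km n es ts =
   four_block_mat (laplacian n es) (0\<^sub>m n (length ts)) (0\<^sub>m (length ts) n) (3 \<cdot>\<^sub>m 1\<^sub>m (length ts) + tri_signed_adj es ts)"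
proof (rule eq_matI)
  show "dim_row (transpose_mat (Km n es ts) * Km n es ts) = dim_row (four_block_mat (laplacian n es) (0\<^sub>m n (length ts)) (0\<^sub>m (length ts) n) (3 \<cdot>\<^sub>m 1\<^sub>m (length ts) + tri_signed_adj es ts))"
    by (simp add: Km_def laplacian_def tri_signed_adj_def)
  show "dim_col (transpose_mat (Km n es ts) * Km n es ts) = dim_col (four_block_mat (laplacian n es) (0\<^sub>m n (length ts)) (0\<^sub>m (length ts) n) (3 \<cdot>\<^sub>m 1\<^sub>m (length ts) + tri_signed_adj es ts))"
    by (simp add: Km_def laplacian_def tri_signed_adj_def)
  fix j j' assume "j < dim_row (four_block_mat (laplacian n es) (0\<^sub>m n (length ts)) (0\<^sub>m (length ts) n) (3 \<cdot>\<^sub>m 1\<^sub>m (length ts) + tri_signed_adj es ts))"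
     "j' < dim_col (four_block_mat (laplacian n es) (0\<^sub>m n (length ts)) (0\<^sub>m (length ts) n) (3 \<cdot>\<^sub>m 1\<^sub>m (length ts) + tri_signed_adj es ts))"
  then have j: "j < n + length ts" "j' < n + length ts" by (auto simp: laplacian_def tri_signed_adj_def)
  have L: "dim_row (laplacian n es) = n" "dim_col (laplacian n es) = n" by (auto simp: laplacian_def)
  have A: "dim_row (3 \<cdot>\<^sub>m 1\<^sub>m (length ts) + tri_signed_adj es ts) = length ts"
     "dim_col (3 \<cdot>\<^sub>m 1\<^sub>m (length ts) + tri_signed_adj es ts) = length ts" by (auto simp: tri_signed_adj_def)
  have lhs: "(transpose_mat (Km n es ts) * Km n es ts) $$ (j,j') =
     (\<Sum>k<length es. (if j < n then sg j (es!k) else st (ts!(j-n)) (es!k)) * (if j' < n then sg j' (es!k) else st (ts!(j'-n)) (es!k)))"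
    unfolding KTK_entry[OF j] using j by (simp add: Km_index)
  have rhs: "four_block_mat (laplacian n es) (0\<^sub>m n (length ts)) (0\<^sub>m (length ts) n) (3 \<cdot>\<^sub>m 1\<^sub>m (length ts) + tri_signed_adj es ts) $$ (j,j') =
     (if j < n then if j' < n then laplacian n es $$ (j,j') else 0
      else if j' < n then 0 else (3 \<cdot>\<^sub>m 1\<^sub>m (length ts) + tri_signed_adj es ts) $$ (j-n, j'-n))"
    by (subst index_mat_four_block(1)) (use j in \<open>simp_all add: L A tri_signed_adj_def\<close>)
  show "(transpose_mat (Km n es ts) * Km n es ts) $$ (j,j') = four_block_mat (laplacian n es) (0\<^sub>m n (length ts)) (0\<^sub>m (length ts) n) (3 \<cdot>\<^sub>m 1\<^sub>m (length ts) + tri_signed_adj es ts) $$ (j,j')"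
    unfolding lhs rhs
  proof -
    consider (a) "j<n" "j'<n" | (b) "j<n" "\<not> j'<n" | (c) "\<not> j<n" "j'<n" | (d) "\<not> j<n" "\<not> j'<n" by blast
    then show "(\<Sum>k<length es. (if j < n then sg j (es!k) else st (ts!(j-n)) (es!k)) * (if j' < n then sg j' (es!k) else st (ts!(j'-n)) (es!k))) =
     (if j < n then if j' < n then laplacian n es $$ (j,j') else 0
      else if j' < n then 0 else (3 \<cdot>\<^sub>m 1\<^sub>m (length ts) + tri_signed_adj es ts) $$ (j-n, j'-n))"
    proof cases
      case a then show ?thesis using lap_entry by simp
    next
      case b
      then have "j' - n < length ts" using j by simp
      then show ?thesis using b b12_zero[of "j'-n" j] by simp
    next
      case c
      then have "j - n < length ts" using j by simp
      then show ?thesis using c b12_zero[of "j-n" j'] by (simp add: mult.commute)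
    next
      case d
      then have i: "j - n < length ts" "j' - n < length ts" using j by auto
      have dA: "tri_signed_adj es ts \<in> carrier_mat (length ts) (length ts)" by (simp add: tri_signed_adj_def)
      show ?thesis
      proof (cases "j - n = j' - n")
        case True
        then show ?thesis using d i A_diag[OF i(1)] dA by (simp add: tri_signed_adj_def)
      next
        case False
        then show ?thesis using d i A_off[OF i False] dA by simp
      qed
    qed
  qed
qed

end

lemma lap_sym: "i < n \<Longrightarrow> j < n \<Longrightarrow> laplacian n es $$ (i,j) = laplacian n es $$ (j,i)"
  by (auto simp: laplacian_def adj_def)

lemma tsa_sym: "i < length ts \<Longrightarrow> j < length ts \<Longrightarrow> tri_signed_adj es ts $$ (i,j) = tri_signed_adj es ts $$ (j,i)"
proof -
  assume i: "i < length ts" and j: "j < length ts"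
  define c1 where "c1 i j = (\<exists>e\<in>set es. edge_in e (tri_set (ts ! i)) \<and> edge_in e (tri_set (ts ! j)))" for i j
  define c2 where "c2 i j = (\<exists>e\<in>set es. edge_in e (tri_set (ts ! i)) \<and> edge_in e (tri_set (ts ! j)) \<and>
             ((tri_pos (ts ! i) e \<and> tri_pos (ts ! j) e) \<or> (tri_neg (ts ! i) e \<and> tri_neg (ts ! j) e)))" for i j
  have e: "tri_signed_adj es ts $$ (i',j') = (if i' = j' then 0 else if c1 i' j' then (if c2 i' j' then 1 else -1) else 0)"
    if "i' < length ts" "j' < length ts" for i' j'
    using that unfolding tri_signed_adj_def c1_def c2_def by simp
  have s1: "c1 i j = c1 j i" unfolding c1_def by blast
  have s2: "c2 i j = c2 j i" unfolding c2_def by blast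
  show ?thesis unfolding e[OF i j] e[OF j i] s1 s2 by (simp add: eq_commute[of i j])
qed

lemma char_poly_nz: "(A :: real mat) \<in> carrier_mat k k \<Longrightarrow> char_poly A \<noteq> 0"
  using degree_monic_char_poly[of A k] by auto

lemma order_X_pow: "(x::real) \<noteq> 0 \<Longrightarrow> order x ([:0,1:]^k) = 0"
  by (rule order_0I) simp

theorem theorem5p1:
  fixes n :: nat and es :: "(nat \<times> nat) list" and ts :: "(nat \<times> nat \<times> nat) list"
  assumes "simple_oriented_graph n es"
    and "es \<noteq> []"
    and "oriented_triangles es ts"
  shows "(\<forall>x::real. x \<noteq> 0 \<longrightarrow>
            order x (char_poly (helmholtzian es)) =
            order x (char_poly (laplacian n es)) + order (x - 3) (char_poly (tri_signed_adj es ts)))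
     \<and> max_eig (helmholtzian es) =
         (if ts = [] then max_eig (laplacian n es)
          else max (max_eig (laplacian n es)) (3 + max_eig (tri_signed_adj es ts)))"
proof -
  interpret gctx n es ts using assms(1,3) by unfold_locales
  let ?K = "Km n es ts"
  let ?m = "length es"
  let ?t = "length ts"
  let ?H = "helmholtzian es"
  let ?L = "laplacian n es"
  let ?A = "tri_signed_adj es ts"
  let ?X = "[:0,1:] :: real poly"
  have K: "?K \<in> carrier_mat ?m (n + ?t)" by (rule Km_carrier)
  have Hc: "?H \<in> carrier_mat ?m ?m" by (simp add: helmholtzian_def)
  have Lc: "?L \<in> carrier_mat n n" by (simp add: laplacian_def)
  have Ac: "?A \<in> carrier_mat ?t ?t" by (simp add: tri_signed_adj_def)
  have cpeq: "?X^(n + ?t) * char_poly ?H = ?X^?m * (char_poly ?L * pcompose (char_poly ?A) [:-3,1:])"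
  proof -
    have "?X^(n + ?t) * char_poly ?H = ?X^?m * char_poly (transpose_mat ?K * ?K)"
      unfolding H_eq by (rule char_poly_sylvester[OF K])
    also have "char_poly (transpose_mat ?K * ?K) = char_poly ?L * char_poly (3 \<cdot>\<^sub>m 1\<^sub>m ?t + ?A)"
      unfolding KTK_eq by (rule char_poly_block_diag[OF Lc], use Ac in simp)
    also have "char_poly (3 \<cdot>\<^sub>m 1\<^sub>m ?t + ?A) = pcompose (char_poly ?A) [:-3,1:]"
      by (rule char_poly_shift[OF Ac])
    finally show ?thesis .
  qed
  have nzH: "char_poly ?H \<noteq> 0" by (rule char_poly_nz[OF Hc])
  have nzL: "char_poly ?L \<noteq> 0" by (rule char_poly_nz[OF Lc])
  have nzA: "char_poly ?A \<noteq> 0" by (rule char_poly_nz[OF Ac])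
  have nzP: "pcompose (char_poly ?A) [:-3,1:] \<noteq> 0"
  proof
    assume a: "pcompose (char_poly ?A) [:-3,1:] = 0"
    have "char_poly ?A = pcompose (pcompose (char_poly ?A) [:-3,1:]) [:3,1:]"
      by (rule pcompose_lin_inv[symmetric])
    also have "\<dots> = 0" unfolding a by simp
    finally show False using nzA by simp
  qed
  have part1: "order x (char_poly ?H) = order x (char_poly ?L) + order (x - 3) (char_poly ?A)"
    if x: "x \<noteq> 0" for x
  proof -
    have "order x (?X^(n + ?t) * char_poly ?H) = order x (char_poly ?H)"
      using nzH by (simp add: order_mult order_X_pow[OF x])
    also have "order x (?X^(n + ?t) * char_poly ?H) = order x (?X^?m * (char_poly ?L * pcompose (char_poly ?A) [:-3,1:]))"
      unfolding cpeq ..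
    also have "\<dots> = order x (char_poly ?L) + order x (pcompose (char_poly ?A) [:-3,1:])"
      using nzL nzP by (simp add: order_mult order_X_pow[OF x])
    finally show ?thesis by (simp add: order_pcompose_shift)
  qed
  have eigH: "eigenvalue ?H x \<longleftrightarrow> eigenvalue ?L x \<or> eigenvalue ?A (x - 3)" if x: "x \<noteq> 0" for x
    unfolding eigenvalue_root_char_poly[OF Hc] eigenvalue_root_char_poly[OF Lc] eigenvalue_root_char_poly[OF Ac]
    using part1[OF x] nzH nzL nzA by (simp add: order_root)
  have finH: "finite {x. eigenvalue ?H x}"
    unfolding eigenvalue_root_char_poly[OF Hc] using poly_roots_finite[OF nzH] .
  have finL: "finite {x. eigenvalue ?L x}"
    unfolding eigenvalue_root_char_poly[OF Lc] using poly_roots_finite[OF nzL] .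
  have finA: "finite {x. eigenvalue ?A x}"
    unfolding eigenvalue_root_char_poly[OF Ac] using poly_roots_finite[OF nzA] .
  have trL: "tr ?L > 0"
  proof -
    obtain e0 where e0: "e0 \<in> set es" using assms(2) by (cases es) auto
    let ?u = "fst e0"
    have u: "?u < n" "snd e0 < n" using Ep[OF e0] by auto
    have "adj es ?u (snd e0)" using e0 by (cases e0) (auto simp: adj_def)
    then have "snd e0 \<in> {v. v < n \<and> adj es ?u v}" using u by simp
    moreover have "finite {v. v < n \<and> adj es ?u v}" by simp
    ultimately have c: "card {v. v < n \<and> adj es ?u v} > 0" by (auto simp: card_gt_0_iff)
    have "tr ?L = (\<Sum>i<n. real (card {v. v < n \<and> adj es i v}))"
      unfolding tr_def by (simp add: laplacian_def)
    also have "\<dots> \<ge> real (card {v. v < n \<and> adj es ?u v})"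
      by (rule member_le_sum, use u in auto)
    finally show ?thesis using c by simp
  qed
  obtain r where r: "r > 0" "eigenvalue ?L r"
    using sym_pos_eig[OF Lc lap_sym trL] by blast
  define mu where "mu = Max {x. eigenvalue ?L x}"
  have mu_in: "eigenvalue ?L mu" unfolding mu_def using Max_in[OF finL] r(2) by auto
  have mu_ge: "y \<le> mu" if "eigenvalue ?L y" for y unfolding mu_def using Max_ge[OF finL] that by simp
  have mu_pos: "mu > 0" using mu_ge[OF r(2)] r(1) by simp
  have mu_H: "eigenvalue ?H mu" using eigH[of mu] mu_pos mu_in by simp
  have part2: "max_eig ?H = (if ts = [] then max_eig ?L else max (max_eig ?L) (3 + max_eig ?A))"
  proof (cases "ts = []")
    case True
    have noA: "\<not> eigenvalue ?A y" for y
    proof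
      assume "eigenvalue ?A y"
      then obtain v where "v \<in> carrier_vec 0" "v \<noteq> 0\<^sub>v 0"
        unfolding eigenvalue_def eigenvector_def using True by (auto simp: tri_signed_adj_def)
      then show False by (metis carrier_vecD eq_vecI index_zero_vec(2) less_nat_zero_code)
    qed
    have "Max {x. eigenvalue ?H x} = mu"
    proof (rule Max_eqI[OF finH])
      fix y assume "y \<in> {x. eigenvalue ?H x}"
      then have y: "eigenvalue ?H y" by simp
      show "y \<le> mu"
      proof (cases "y = 0")
        case True then show ?thesis using mu_pos by simp
      next
        case False then show ?thesis using eigH[OF False] y noA mu_ge by auto
      qed
    next
      show "mu \<in> {x. eigenvalue ?H x}" using mu_H by simp
    qed
    then show ?thesis using True by (simp add: max_eig_def mu_def)
  next
    case False
    then have tpos: "?t > 0" by simp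
    obtain s where s: "eigenvalue ?A s" using sym_eig_exists[OF Ac tpos tsa_sym] by blast
    define eta where "eta = Max {x. eigenvalue ?A x}"
    have eta_in: "eigenvalue ?A eta" unfolding eta_def using Max_in[OF finA] s by auto
    have eta_ge: "y \<le> eta" if "eigenvalue ?A y" for y unfolding eta_def using Max_ge[OF finA] that by simp
    have "Max {x. eigenvalue ?H x} = max mu (3 + eta)"
    proof (rule Max_eqI[OF finH])
      fix y assume "y \<in> {x. eigenvalue ?H x}"
      then have y: "eigenvalue ?H y" by simp
      show "y \<le> max mu (3 + eta)"
      proof (cases "y = 0")
        case True then show ?thesis using mu_pos by simp
      next
        case False
        then have "eigenvalue ?L y \<or> eigenvalue ?A (y - 3)" using eigH y by blast
        then show ?thesis
        proof
          assume "eigenvalue ?L y"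
          then have "y \<le> mu" by (rule mu_ge)
          then show ?thesis by simp
        next
          assume "eigenvalue ?A (y - 3)"
          then have "y - 3 \<le> eta" by (rule eta_ge)
          then show ?thesis by simp
        qed
      qed
    next
      show "max mu (3 + eta) \<in> {x. eigenvalue ?H x}"
      proof (cases "mu \<ge> 3 + eta")
        case True then show ?thesis using mu_H by (simp add: max_def)
      next
        case F: False
        then have ne: "3 + eta \<noteq> 0" using mu_pos by linarith
        have "eigenvalue ?H (3 + eta)" using eigH[OF ne] eta_in by simp
        then show ?thesis using F by (simp add: max_def)
      qed
    qed
    then show ?thesis using False by (simp add: max_eig_def mu_def eta_def)
  qed
  show ?thesis using part1 part2 by blast
qed

end
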